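(* For every $\theta>0$ one has $1-4(\theta+1)\lambda(\theta)>0$, so $j$ is well defined on $(0,\infty)$, and $j$ satisfies for all $\theta>0$ \[\big(4\theta\lambda(\theta)-e^{-f'(\theta)}\big)j'(\theta)+\frac{f''(\theta)}{2}\big(4\theta^2\lambda(\theta)+e^{-f'(\theta)}\big)+4\lambda(\theta)\Big(\frac12-\theta\Big)=0.\]
   Context: Define $\lambda:[0,\infty)\to(0,1/4]$ by $\lambda(0)=1/4$ and, for $\theta>0$, $\lambda(\theta)$ is the unique $\lambda\in(0,1/4)$ with $-1+\frac{\operatorname{artanh}(\sqrt{1-4\lambda})}{\sqrt{1-4\lambda}}=\theta$. For $\theta>0$ set $f(\theta)=-\ln\lambda(\theta)-2\theta-\theta\ln\big(1-4\lambda(\theta)\big)$ and $j(\theta)=-\tfrac12\ln\big(1-4(\theta+1)\lambda(\theta)\big)+\tfrac12\ln 2$. *)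

theory Defs
  imports "HOL-Analysis.Analysis"
begin

definition lam :: "real \<Rightarrow> real" where
  "lam \<theta> = (if \<theta> = 0 then 1/4
     else THE l. 0 < l \<and> l < 1/4 \<and>
       -1 + artanh (sqrt (1 - 4*l)) / sqrt (1 - 4*l) = \<theta>)"

definition f_fun :: "real \<Rightarrow> real" where
  "f_fun \<theta> = - ln (lam \<theta>) - 2*\<theta> - \<theta> * ln (1 - 4 * lam \<theta>)"

definition j_fun :: "real \<Rightarrow> real" where
  "j_fun \<theta> = - (1/2) * ln (1 - 4*(\<theta>+1) * lam \<theta>) + (1/2) * ln 2"

end

theory Submission
  imports Defs
begin

definition gg :: "real \<Rightarrow> real" where
  "gg s = artanh s / s - 1"

lemma artanh_gt: fixes s :: real assumes "0 < s" "s < 1" shows "s < artanh s"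
proof -
  have "(\<lambda>x. artanh x - x) 0 < (\<lambda>x. artanh x - x) s"
  proof (rule DERIV_pos_imp_increasing_open[OF assms(1)])
    fix x :: real assume x: "0 < x" "x < s"
    have "x^2 < 1" using x assms by (simp add: abs_square_less_1)
    moreover have "x^2 > 0" using x by simp
    ultimately have "1 / (1 - x^2) - 1 > 0" by (simp add: field_simps)
    moreover have "((\<lambda>x. artanh x - x) has_real_derivative (1 / (1 - x^2) - 1)) (at x)"
      using x assms by (auto intro!: derivative_eq_intros)
    ultimately show "\<exists>y. ((\<lambda>x. artanh x - x) has_real_derivative y) (at x) \<and> y > 0" by blast
  next
    show "continuous_on {0..s} (\<lambda>x. artanh x - x)"
      using assms by (auto intro!: continuous_intros)
  qed
  thus ?thesis by simp
qed

lemma h_pos: fixes s :: real assumes "0 < s" "s < 1" shows "(1 - s^2) * artanh s < s"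
proof -
  have "(\<lambda>x. x - (1 - x^2) * artanh x) 0 < (\<lambda>x. x - (1 - x^2) * artanh x) s"
  proof (rule DERIV_pos_imp_increasing_open[OF assms(1)])
    fix x :: real assume x: "0 < x" "x < s"
    have x1: "x^2 < 1" using x assms by (simp add: abs_square_less_1)
    have "artanh x > 0" using artanh_gt[of x] x assms by simp
    hence "2 * x * artanh x > 0" using x by simp
    moreover have "((\<lambda>x. x - (1 - x^2) * artanh x) has_real_derivative (2 * x * artanh x)) (at x)"
    proof -
      have "((\<lambda>x. x - (1 - x^2) * artanh x) has_real_derivative
         (1 - ((0 - 2 * x ^ 1 * 1) * artanh x + (1 - x^2) * (1 / (1 - x^2))))) (at x)"
        using x assms by (auto intro!: derivative_eq_intros)
      moreover have "(1 - ((0 - 2 * x ^ 1 * 1) * artanh x + (1 - x^2) * (1 / (1 - x^2)))) = 2 * x * artanh x"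
        using x1 by (simp add: field_simps)
      ultimately show ?thesis by simp
    qed
    ultimately show "\<exists>y. ((\<lambda>x. x - (1 - x^2) * artanh x) has_real_derivative y) (at x) \<and> y > 0" by blast
  next
    show "continuous_on {0..s} (\<lambda>x. x - (1 - x^2) * artanh x)"
      using assms by (auto intro!: continuous_intros)
  qed
  thus ?thesis by simp
qed

lemma gg_deriv: assumes "0 < s" "s < 1"
  shows "(gg has_real_derivative (s - (1 - s^2) * artanh s) / (s^2 * (1 - s^2))) (at s)"
proof -
  have s1: "s^2 < 1" using assms by (simp add: abs_square_less_1)
  have "(gg has_real_derivative ((1 / (1 - s^2)) * s - artanh s * 1) / (s * s) - 0) (at s)"
    unfolding gg_def[abs_def] using assms by (auto intro!: derivative_eq_intros)
  moreover have "((1 / (1 - s^2)) * s - artanh s * 1) / (s * s) - 0 = (s - (1 - s^2) * artanh s) / (s^2 * (1 - s^2))"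
    using s1 assms by (simp add: field_simps power2_eq_square)
  ultimately show ?thesis by simp
qed

lemma gg_deriv_pos: fixes s :: real assumes "0 < s" "s < 1"
  shows "(s - (1 - s^2) * artanh s) / (s^2 * (1 - s^2)) > 0"
proof -
  have s1: "s^2 < 1" using assms by (simp add: abs_square_less_1)
  show ?thesis using h_pos[OF assms] s1 assms by (intro divide_pos_pos) auto
qed

lemma gg_mono: assumes "0 < a" "a < b" "b < 1" shows "gg a < gg b"
proof (rule DERIV_pos_imp_increasing_open[OF assms(2)])
  fix x assume "a < x" "x < b"
  thus "\<exists>y. (gg has_real_derivative y) (at x) \<and> y > 0"
    using gg_deriv gg_deriv_pos assms by (meson less_trans)
next
  show "continuous_on {a..b} gg" unfolding gg_def[abs_def] using assms
    by (auto intro!: continuous_intros)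
qed

lemma gg_pos: assumes "0 < s" "s < 1" shows "gg s > 0"
  using artanh_gt[OF assms] assms by (simp add: gg_def field_simps)

lemma gg_inj: assumes "0 < a" "a < 1" "0 < b" "b < 1" "gg a = gg b" shows "a = b"
  using gg_mono[of a b] gg_mono[of b a] assms by (cases a b rule: linorder_cases) auto


lemma gg_cont: fixes x :: real assumes "0 < x" "x < 1" shows "isCont gg x"
  using gg_deriv[OF assms] DERIV_isCont by blast

lemma gg_surj: fixes t :: real assumes "0 < t" shows "\<exists>s. 0 < s \<and> s < 1 \<and> gg s = t"
proof -
  define a where "a = sqrt (t/(1+t))"
  have a2: "a^2 = t/(1+t)" unfolding a_def using assms by simp
  have a0: "0 < a" unfolding a_def using assms by simp
  have "a^2 < 1" using a2 assms by simp
  hence a1: "a < 1" using a0 by (simp add: abs_square_less_1)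
  have "(1 - a^2) * artanh a < a" using h_pos[OF a0 a1] .
  moreover have "1 - a^2 = 1/(1+t)" using a2 assms by (simp add: field_simps)
  ultimately have "artanh a < a * (1+t)" using assms by (simp add: field_simps)
  hence ga: "gg a < t" unfolding gg_def using a0 by (simp add: field_simps)
  define b where "b = tanh (t+1)"
  have b0: "0 < b" unfolding b_def using assms by simp
  have b1: "b < 1" unfolding b_def by (rule tanh_real_lt_1)
  have "artanh b = t + 1" unfolding b_def by (rule artanh_tanh_real)
  hence "gg b = (t+1)/b - 1" unfolding gg_def by simp
  moreover have "(t+1)/b > t+1"
  proof -
    have "b*(1+t) < 1*(1+t)" by (rule mult_strict_right_mono) (use b1 assms in auto)
    thus ?thesis using b0 by (simp add: field_simps)
  qed
  ultimately have gb: "gg b > t" by simp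
  have ab: "a \<le> b"
  proof (rule ccontr)
    assume "\<not> a \<le> b"
    hence "gg b < gg a" using gg_mono[OF b0 _ a1] by simp
    thus False using ga gb by simp
  qed
  have "\<exists>x\<ge>a. x \<le> b \<and> gg x = t"
    apply (rule IVT[of gg a t b])
    using ga gb ab a0 b1 gg_cont by auto
  then obtain x where "x \<ge> a" "x \<le> b" "gg x = t" by blast
  thus ?thesis using a0 b1 by (intro exI[of _ x]) auto
qed

lemma sq_aux: fixes s :: real assumes "0 < s" shows "sqrt (1 - 4*((1 - s^2)/4)) = s"
proof -
  have "1 - 4*((1 - s^2)/4) = s^2" by (simp add: field_simps)
  hence "sqrt (1 - 4*((1 - s^2)/4)) = sqrt (s^2)" by (rule arg_cong)
  also have "\<dots> = s" using assms by simp
  finally show ?thesis .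
qed

lemma lam_char: fixes t s :: real assumes "0 < t" "0 < s" "s < 1" "gg s = t"
  shows "lam t = (1 - s^2)/4"
proof -
  let ?P = "\<lambda>l::real. 0 < l \<and> l < 1/4 \<and> -1 + artanh (sqrt (1 - 4*l)) / sqrt (1 - 4*l) = t"
  have s2: "s^2 < 1" using assms by (simp add: abs_square_less_1)
  have s2p: "s^2 > 0" using assms by simp
  have P0: "?P ((1 - s^2)/4)"
  proof -
    have e: "-1 + artanh s / s = t" using assms(4) unfolding gg_def by linarith
    have l0: "0 < 1 - s^2" using s2 by linarith
    have l1: "0 < (1 - s^2)/4" by (rule divide_pos_pos) (use l0 in auto)
    have l2: "(1 - s^2)/4 < 1/4" by (rule divide_strict_right_mono) (use s2p in auto)
    show ?thesis unfolding sq_aux[OF assms(2)] using e l1 l2 by blast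
  qed
  have uniq: "l = (1 - s^2)/4" if "?P l" for l
  proof -
    define r where "r = sqrt (1 - 4*l)"
    have lpos: "0 \<le> 1 - 4*l" using that by linarith
    have r0: "0 < r" "r < 1" unfolding r_def using that by auto
    have "gg r = t" unfolding gg_def r_def using that by linarith
    hence rs: "r = s" using gg_inj[OF r0 assms(2,3)] assms(4) by simp
    have "r^2 = 1 - 4*l" unfolding r_def using lpos by (rule real_sqrt_pow2)
    hence "s^2 = 1 - 4*l" using rs by simp
    thus ?thesis by simp
  qed
  have ex: "\<exists>!l. ?P l"
    by (rule ex1I[where a="(1 - s^2)/4"], rule P0, rule uniq, assumption)
  have "(THE l. ?P l) = (1 - s^2)/4" by (rule the1_equality[OF ex P0])
  thus ?thesis unfolding lam_def using assms by simp
qed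

definition SS :: "real \<Rightarrow> real" where "SS t = sqrt (1 - 4 * lam t)"

lemma SS_props: fixes t :: real assumes "0 < t"
  shows "0 < SS t" "SS t < 1" "gg (SS t) = t" "lam t = (1 - (SS t)^2)/4"
proof -
  obtain s where s: "0 < s" "s < 1" "gg s = t" using gg_surj[OF assms] by blast
  have l: "lam t = (1 - s^2)/4" using lam_char[OF assms s] .
  have "SS t = s" unfolding SS_def l by (rule sq_aux[OF s(1)])
  thus "0 < SS t" "SS t < 1" "gg (SS t) = t" "lam t = (1 - (SS t)^2)/4" using s l by auto
qed

lemma SS_gg: fixes s :: real assumes "0 < s" "s < 1" shows "SS (gg s) = s"
proof -
  have l: "lam (gg s) = (1 - s^2)/4" using lam_char[OF gg_pos[OF assms] assms refl] .
  show ?thesis unfolding SS_def l by (rule sq_aux[OF assms(1)])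
qed

lemma E_pos: fixes t :: real assumes "0 < t" shows "(SS t)^2 - t * (1 - (SS t)^2) > 0"
proof -
  have x: "0 < SS t" "SS t < 1" "gg (SS t) = t" using SS_props[OF assms] by auto
  have "artanh (SS t) = (t + 1) * SS t" using x unfolding gg_def by (simp add: field_simps)
  moreover have "(1 - (SS t)^2) * artanh (SS t) < SS t" using h_pos[OF x(1,2)] .
  ultimately have "(1 - (SS t)^2) * (t + 1) * SS t < 1 * SS t" by (simp add: mult.assoc mult.commute)
  hence "(1 - (SS t)^2) * (t + 1) < 1" using x(1) by (meson mult_less_cancel_right_pos)
  thus ?thesis by (simp add: algebra_simps)
qed

definition Sd :: "real \<Rightarrow> real" where
  "Sd t = SS t * (1 - (SS t)^2) / ((SS t)^2 - t * (1 - (SS t)^2))"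

lemma SS_deriv: fixes t :: real assumes "0 < t" shows "(SS has_real_derivative Sd t) (at t)"
proof -
  have x: "0 < SS t" "SS t < 1" "gg (SS t) = t" using SS_props[OF assms] by auto
  let ?x = "SS t"
  let ?D = "(?x - (1 - ?x^2) * artanh ?x) / (?x^2 * (1 - ?x^2))"
  have cont: "isCont SS (gg ?x)"
    apply (rule isCont_inverse_function2[of "?x/2" ?x "(1 + ?x)/2"])
    using x by (auto intro!: SS_gg gg_cont)
  hence cont': "isCont SS t" using x by simp
  have der: "(SS has_real_derivative inverse ?D) (at t)"
    apply (rule DERIV_inverse_function[where f=gg and a=0 and b="t+1"])
    using gg_deriv[OF x(1,2)] gg_deriv_pos[OF x(1,2)] assms cont' SS_props by auto
  have at: "artanh ?x = (t + 1) * ?x" using x unfolding gg_def by (simp add: field_simps)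
  have s2: "?x^2 < 1" using x by (simp add: abs_square_less_1)
  have E: "?x^2 - t * (1 - ?x^2) > 0" using E_pos[OF assms] .
  let ?E = "?x^2 - t * (1 - ?x^2)"
  have n: "?x - (1 - ?x^2) * artanh ?x = ?x * ?E" unfolding at by (simp add: algebra_simps)
  have "?D = (?x * ?E) / (?x^2 * (1 - ?x^2))" by (simp only: n)
  also have "\<dots> = ?E / (?x * (1 - ?x^2))" using x by (simp add: power2_eq_square)
  finally have "inverse ?D = (?x * (1 - ?x^2)) / ?E" by simp
  hence "inverse ?D = Sd t" unfolding Sd_def by simp
  thus ?thesis using der by simp
qed

lemma SS_facts: fixes u :: real assumes "0 < u"
  shows "0 < SS u" "0 < 1 - (SS u)^2" "0 < (SS u)^2 - u * (1 - (SS u)^2)"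
proof -
  note Q = SS_props[OF assms]
  show "0 < SS u" by (rule Q(1))
  have "(SS u)^2 < 1" using Q(1,2) by (simp add: abs_square_less_1)
  thus "0 < 1 - (SS u)^2" by simp
  show "0 < (SS u)^2 - u * (1 - (SS u)^2)" by (rule E_pos[OF assms])
qed

lemma final_alg:
  fixes x u d E :: real
  assumes x0: "0 < x" and Ep: "0 < E" and hE: "E = x*x - u*(1-x*x)" and hd: "d = x*(1-x*x)/E"
  shows "(4*u*((1 - x^2)/4) - x*x) * (0 - 1/2 * (inverse E * ((d*x + d*x) - (1*(1-x*x) + (0 - (d*x+d*x))*u))))
     + (-2*(inverse x*d))/2 * (4*u^2*((1-x^2)/4) + x*x) + 4*((1-x^2)/4)*(1/2 - u) = 0"
proof -
  define w where "w = 1 - x*x"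
  have x2: "x^2 = x*x" by (simp add: power2_eq_square)
  have dE: "d * E = x * w" unfolding hd w_def using Ep by simp
  have T1: "4*u*((1 - x^2)/4) - x*x = - E" unfolding x2 hE by (simp add: field_simps)
  define Z where "Z = (d*x + d*x) - (1*(1-x*x) + (0 - (d*x+d*x))*u)"
  have T1': "(- E) * (0 - 1/2 * (inverse E * Z)) = Z/2" using Ep by (simp add: field_simps)
  have T2: "(-2*(inverse x*d))/2 * (4*u^2*((1-x^2)/4) + x*x) = -(d/x) * (u^2*w + x*x)"
    unfolding x2 w_def using x0 by (simp add: field_simps)
  have T3: "4*((1-x^2)/4)*(1/2 - u) = w*(1/2 - u)" unfolding x2 w_def by simp
  have S: "Z/2 - (d/x) * (u^2*w + x*x) + w*(1/2 - u) = (u/x) * (d*(x*x - u*w) - x*w)"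
    unfolding Z_def w_def using x0 by (simp add: field_simps power2_eq_square) (simp add: algebra_simps)?
  have "d*(x*x - u*w) - x*w = 0" using dE hE unfolding w_def by simp
  hence "Z/2 - (d/x) * (u^2*w + x*x) + w*(1/2 - u) = 0" using S by simp
  thus ?thesis unfolding T1 T2 T3 T1'[unfolded Z_def] using T1'
    by (simp add: Z_def)
qed

lemma key_alg:
  fixes x u d E :: real
  assumes x0: "0 < x" and w0: "0 < 1 - x*x" and Ep: "0 < E" and hE: "E = x*x - u*(1-x*x)" and hd: "d = x*(1-x*x)/E"
  shows "0 - inverse (1 - x*x) * (0 - (d*x + d*x)) - 2*1 - (2*1*ln x + inverse x * d * (2*u)) = -2 * ln x"
proof -
  have a: "inverse (1 - x*x) * (d*x + d*x) = 2*(x*x)/E" unfolding hd using w0 Ep by (simp add: field_simps)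
  have b: "inverse x * d * (2*u) = 2*(u*(1-x*x))/E" unfolding hd using x0 Ep by (simp add: field_simps)
  have c: "2*(x*x)/E - 2*(u*(1-x*x))/E = 2*(x*x - u*(1-x*x))/E" by (simp add: diff_divide_distrib)
  also have "\<dots> = 2" unfolding hE[symmetric] using Ep by simp
  finally have c': "2*(x*x)/E - 2*(u*(1-x*x))/E = 2" .
  have "0 - inverse (1 - x*x) * (0 - (d*x + d*x)) - 2*1 - (2*1*ln x + inverse x * d * (2*u))
      = inverse (1 - x*x) * (d*x + d*x) - inverse x * d * (2*u) - 2 - 2 * ln x" by simp
  also have "\<dots> = -2 * ln x" unfolding a b using c' by simp
  finally show ?thesis .
qed

lemma derivs:
  fixes u :: real assumes u: "0 < u"
  shows "((\<lambda>w. ln 4 - ln (1 - SS w * SS w) - 2 * w - 2 * w * ln (SS w)) has_real_derivative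
           (-2 * ln (SS u))) (at u)"
    and "((\<lambda>w. 1/2 * ln 2 - 1/2 * ln (SS w * SS w - w * (1 - SS w * SS w))) has_real_derivative
           (0 - 1/2 * (inverse (SS u * SS u - u * (1 - SS u * SS u)) * ((Sd u * SS u + Sd u * SS u) - (1 * (1 - SS u * SS u) + (0 - (Sd u * SS u + Sd u * SS u)) * u))))) (at u)"
    and "((\<lambda>w. -2 * ln (SS w)) has_real_derivative (-2 * (inverse (SS u) * Sd u))) (at u)"
proof -
  note F = SS_facts[OF u]
  let ?x = "SS u" and ?d = "Sd u"
  have x0: "0 < ?x" by (rule F(1))
  have w0: "0 < 1 - ?x * ?x" using F(2) by (simp add: power2_eq_square)
  have E0: "0 < ?x * ?x - u * (1 - ?x * ?x)" using F(3) by (simp add: power2_eq_square)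
  have hd: "?d = ?x * (1 - ?x * ?x) / (?x * ?x - u * (1 - ?x * ?x))" unfolding Sd_def by (simp add: power2_eq_square)
  have hS: "(SS has_real_derivative ?d) (at u)" by (rule SS_deriv[OF u])
  have hS2: "((\<lambda>w. SS w * SS w) has_real_derivative (?d * ?x + ?d * ?x)) (at u)"
    using DERIV_mult[OF hS hS] .
  have h1: "((\<lambda>w. 1 - SS w * SS w) has_real_derivative (0 - (?d * ?x + ?d * ?x))) (at u)"
    using DERIV_diff[OF DERIV_const hS2] .
  have hl1: "((\<lambda>w. ln (1 - SS w * SS w)) has_real_derivative (inverse (1 - ?x * ?x) * (0 - (?d * ?x + ?d * ?x)))) (at u)"
    using DERIV_chain'[OF h1 DERIV_ln[OF w0]] by simp
  have hlS: "((\<lambda>w. ln (SS w)) has_real_derivative (inverse ?x * ?d)) (at u)"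
    using DERIV_chain'[OF hS DERIV_ln[OF x0]] by simp
  have hw: "((\<lambda>w. 2 * w) has_real_derivative (2 * 1)) (at u)"
    using DERIV_cmult[where c=2, OF DERIV_ident] .
  have h2wl: "((\<lambda>w. 2 * w * ln (SS w)) has_real_derivative (2 * 1 * ln ?x + inverse ?x * ?d * (2 * u))) (at u)"
    using DERIV_mult[OF hw hlS] .
  have hF: "((\<lambda>w. ln 4 - ln (1 - SS w * SS w) - 2 * w - 2 * w * ln (SS w)) has_real_derivative
      (0 - inverse (1 - ?x * ?x) * (0 - (?d * ?x + ?d * ?x)) - 2 * 1 - (2 * 1 * ln ?x + inverse ?x * ?d * (2 * u)))) (at u)"
    using DERIV_diff[OF DERIV_diff[OF DERIV_diff[OF DERIV_const hl1] hw] h2wl] .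
  show "((\<lambda>w. ln 4 - ln (1 - SS w * SS w) - 2 * w - 2 * w * ln (SS w)) has_real_derivative
           (-2 * ln (SS u))) (at u)"
    by (rule DERIV_cong[OF hF key_alg[OF x0 w0 E0 refl hd]])
  have hG: "((\<lambda>w. SS w * SS w - w * (1 - SS w * SS w)) has_real_derivative
      ((?d * ?x + ?d * ?x) - (1 * (1 - ?x * ?x) + (0 - (?d * ?x + ?d * ?x)) * u))) (at u)"
    using DERIV_diff[OF hS2 DERIV_mult[OF DERIV_ident h1]] .
  have hlG: "((\<lambda>w. ln (SS w * SS w - w * (1 - SS w * SS w))) has_real_derivative
      (inverse (?x * ?x - u * (1 - ?x * ?x)) * ((?d * ?x + ?d * ?x) - (1 * (1 - ?x * ?x) + (0 - (?d * ?x + ?d * ?x)) * u)))) (at u)"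
    using DERIV_chain'[OF hG DERIV_ln[OF E0]] by simp
  show "((\<lambda>w. 1/2 * ln 2 - 1/2 * ln (SS w * SS w - w * (1 - SS w * SS w))) has_real_derivative
           (0 - 1/2 * (inverse (SS u * SS u - u * (1 - SS u * SS u)) * ((Sd u * SS u + Sd u * SS u) - (1 * (1 - SS u * SS u) + (0 - (Sd u * SS u + Sd u * SS u)) * u))))) (at u)"
    using DERIV_diff[OF DERIV_const DERIV_cmult[where c="1/2", OF hlG]] .
  show "((\<lambda>w. -2 * ln (SS w)) has_real_derivative (-2 * (inverse (SS u) * Sd u))) (at u)"
    using DERIV_cmult[where c="-2", OF hlS] .
qed

lemma f_eq: fixes w :: real assumes w: "0 < w"
  shows "f_fun w = ln 4 - ln (1 - SS w * SS w) - 2 * w - 2 * w * ln (SS w)"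
proof -
  note Q = SS_props[OF w] and G = SS_facts[OF w]
  have w0: "0 < 1 - SS w * SS w" using G(2) by (simp add: power2_eq_square)
  have l: "lam w = (1 - SS w * SS w)/4" using Q(4) by (simp add: power2_eq_square)
  have h1: "ln (lam w) = ln (1 - SS w * SS w) - ln 4" unfolding l using w0 by (simp add: ln_div)
  have "1 - 4 * lam w = SS w * SS w" unfolding l by (simp add: field_simps)
  hence h2: "ln (1 - 4 * lam w) = 2 * ln (SS w)" using G(1) by (simp add: ln_mult)
  show ?thesis unfolding f_fun_def h1 h2 by (simp add: algebra_simps)
qed

lemma f_deriv: fixes w :: real assumes w: "0 < w"
  shows "(f_fun has_real_derivative -2 * ln (SS w)) (at w)"
  by (rule has_field_derivative_transform_within_open[OF derivs(1)[OF w], where S="{0<..}"])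
     (use w f_eq in auto)

lemma df_eq: fixes w :: real assumes w: "0 < w" shows "deriv f_fun w = -2 * ln (SS w)"
  by (rule DERIV_imp_deriv[OF f_deriv[OF w]])

lemma df_deriv: fixes w :: real assumes w: "0 < w"
  shows "(deriv f_fun has_real_derivative -2 * (inverse (SS w) * Sd w)) (at w)"
  by (rule has_field_derivative_transform_within_open[OF derivs(3)[OF w], where S="{0<..}"])
     (use w df_eq in auto)

lemma D_eq: fixes w :: real assumes w: "0 < w"
  shows "1 - 4*(w+1) * lam w = SS w * SS w - w * (1 - SS w * SS w)"
proof -
  have l: "lam w = (1 - SS w * SS w)/4" using SS_props(4)[OF w] by (simp add: power2_eq_square)
  show ?thesis unfolding l by (simp add: field_simps)
qed

lemma j_eq: fixes w :: real assumes w: "0 < w"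
  shows "j_fun w = 1/2 * ln 2 - 1/2 * ln (SS w * SS w - w * (1 - SS w * SS w))"
  unfolding j_fun_def D_eq[OF w] by simp

lemma j_deriv: fixes w :: real assumes w: "0 < w"
  shows "(j_fun has_real_derivative (0 - 1/2 * (inverse (SS w * SS w - w * (1 - SS w * SS w)) * ((Sd w * SS w + Sd w * SS w) - (1 * (1 - SS w * SS w) + (0 - (Sd w * SS w + Sd w * SS w)) * w))))) (at w)"
  by (rule has_field_derivative_transform_within_open[OF derivs(2)[OF w], where S="{0<..}"])
     (use w j_eq in auto)

theorem proposition3:
  fixes \<theta> :: real
  assumes "\<theta> > 0"
  shows "1 - 4*(\<theta>+1) * lam \<theta> > 0
    \<and> f_fun differentiable (at \<theta>)
    \<and> deriv f_fun differentiable (at \<theta>)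
    \<and> j_fun differentiable (at \<theta>)
    \<and> (4*\<theta>*lam \<theta> - exp (- deriv f_fun \<theta>)) * deriv j_fun \<theta>
      + deriv (deriv f_fun) \<theta> / 2 * (4*\<theta>^2*lam \<theta> + exp (- deriv f_fun \<theta>))
      + 4 * lam \<theta> * (1/2 - \<theta>) = 0"
proof -
  have t: "0 < \<theta>" by (rule assms)
  note P = SS_props[OF t] and F = SS_facts[OF t]
  have x0: "0 < SS \<theta>" by (rule F(1))
  have E0: "0 < SS \<theta> * SS \<theta> - \<theta> * (1 - SS \<theta> * SS \<theta>)" using F(3) by (simp add: power2_eq_square)
  have hd: "Sd \<theta> = SS \<theta> * (1 - SS \<theta> * SS \<theta>) / (SS \<theta> * SS \<theta> - \<theta> * (1 - SS \<theta> * SS \<theta>))"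
    unfolding Sd_def by (simp add: power2_eq_square)
  have c1: "1 - 4*(\<theta>+1) * lam \<theta> > 0" unfolding D_eq[OF t] by (rule E0)
  have c2: "f_fun differentiable (at \<theta>)" using f_deriv[OF t] real_differentiable_def by blast
  have c3: "deriv f_fun differentiable (at \<theta>)" using df_deriv[OF t] real_differentiable_def by blast
  have c4: "j_fun differentiable (at \<theta>)" using j_deriv[OF t] real_differentiable_def by blast
  have ex: "exp (- deriv f_fun \<theta>) = SS \<theta> * SS \<theta>"
  proof -
    have "- deriv f_fun \<theta> = ln (SS \<theta> * SS \<theta>)" unfolding df_eq[OF t] using x0 by (simp add: ln_mult)
    thus ?thesis using x0 by simp
  qed
  have e5: "(4*\<theta>*lam \<theta> - exp (- deriv f_fun \<theta>)) * deriv j_fun \<theta>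
      + deriv (deriv f_fun) \<theta> / 2 * (4*\<theta>^2*lam \<theta> + exp (- deriv f_fun \<theta>))
      + 4 * lam \<theta> * (1/2 - \<theta>) = 0"
    unfolding ex DERIV_imp_deriv[OF j_deriv[OF t]] DERIV_imp_deriv[OF df_deriv[OF t]] P(4)
    by (rule final_alg[OF x0 E0 refl hd])
  show ?thesis using c1 c2 c3 c4 e5 by blast
qed

end
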